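(* Let $(X,\mu)$ be a standard probability space, and let $\mu=\int\mu_\omega\,P(d\omega)$ for some probability space $(\Omega,P)$ and kernel $\omega\mapsto\mu_\omega$ from $\Omega$ to $X$. Let $\varepsilon\in(0,1/2)$, let $\Omega_1\subseteq\Omega$ be measurable with $P(\Omega_1)>1-\varepsilon/2$, and assume $I:=\int\mathrm{D}(\mu_\omega\|\mu)\,P(d\omega)<\infty$. Let $m:=\lceil16\varepsilon^{-2}e^{16(I+1)/\varepsilon}\rceil$. Then there are elements $\omega_1,\dots,\omega_m\in\Omega_1$, not necessarily distinct, such that $\big\|\frac1m\sum_{j=1}^m\mu_{\omega_j}-\mu\big\|<3\varepsilon$.
   Context: $\mathrm{D}$ is Kullback--Leibler divergence; $\|\cdot\|$ is the total variation norm of a signed measure (so $\|\mu-\nu\|\le 2$ for probability measures). *)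

theory Defs
  imports "HOL-Probability.Probability"
begin

text \<open>Kullback--Leibler divergence D(N || M) with values in [0, infinity]:
  infinity unless N is absolutely continuous w.r.t. M; otherwise the Lebesgue
  integral of f ln f (f = dN/dM) w.r.t. M, taken as positive part minus negative
  part (the negative part is bounded by 1/e, hence finite).\<close>
definition KL_div :: "'a measure \<Rightarrow> 'a measure \<Rightarrow> ennreal" where
  "KL_div N M =
     (if sets N = sets M \<and> absolutely_continuous M N then
        (let f = (\<lambda>x. enn2real (RN_deriv M N x)) in
          (\<integral>\<^sup>+ x. ennreal (f x * ln (f x)) \<partial>M) - (\<integral>\<^sup>+ x. ennreal (- (f x * ln (f x))) \<partial>M))
      else \<top>)"

definition tv_norm :: "'a measure \<Rightarrow> ('a set \<Rightarrow> real) \<Rightarrow> real" where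
  "tv_norm M \<nu> = Sup {(\<Sum>A\<in>\<A>. \<bar>\<nu> A\<bar>) | \<A>. finite \<A> \<and> \<A> \<subseteq> sets M \<and> disjoint \<A> \<and> \<Union>\<A> = space M}"

end

theory Submission
  imports Defs
begin


lemma exists_le_integral:
  fixes F :: "'b \<Rightarrow> real"
  assumes Q: "prob_space Q" and F: "integrable Q F" and S: "AE \<omega> in Q. \<omega> \<in> S"
  shows "\<exists>\<omega>\<in>S. F \<omega> \<le> (\<integral>\<nu>. F \<nu> \<partial>Q)"
proof (rule ccontr)
  interpret prob_space Q by fact
  assume "\<not> ?thesis"
  then have "AE \<omega> in Q. (\<integral>\<nu>. F \<nu> \<partial>Q) < F \<omega>" using S by (auto elim!: eventually_mono)
  then have "(\<integral>\<omega>. (\<integral>\<nu>. F \<nu> \<partial>Q) \<partial>Q) < (\<integral>\<omega>. F \<omega> \<partial>Q)"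
    by (intro integral_less_AE_space F) (auto simp: emeasure_space_1)
  then show False by (simp add: prob_space)
qed

lemma greedy:
  fixes Q :: "'b measure" and M :: "'a measure" and f :: "'b \<Rightarrow> 'a \<Rightarrow> real" and \<tau> :: "'b \<Rightarrow> real"
  assumes Qp: "prob_space Q" and Mp: "prob_space M"
    and fm[measurable]: "(\<lambda>z. f (fst z) (snd z)) \<in> borel_measurable (Q \<Otimes>\<^sub>M M)"
    and fb: "\<And>\<omega> x. \<bar>f \<omega> x\<bar> \<le> L"
    and f0: "\<And>x. x \<in> space M \<Longrightarrow> (\<integral>\<omega>. f \<omega> x \<partial>Q) = 0"
    and \<tau>i: "integrable Q \<tau>" and \<tau>0: "\<And>\<omega>. 0 \<le> \<tau> \<omega>" and c: "0 \<le> c"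
    and S: "AE \<omega> in Q. \<omega> \<in> S" and SQ: "S \<subseteq> space Q"
  shows "\<exists>\<omega>::nat\<Rightarrow>'b. (\<forall>j\<in>{1..k}. \<omega> j \<in> S) \<and>
     (\<integral>x. (\<Sum>j=1..k. f (\<omega> j) x)\<^sup>2 \<partial>M) + c * (\<Sum>j=1..k. \<tau> (\<omega> j)) \<le> real k * (L\<^sup>2 + c * (\<integral>\<omega>. \<tau> \<omega> \<partial>Q))"
proof (induction k)
  case 0
  then show ?case by simp
next
  case (Suc k)
  interpret Q: prob_space Q by fact
  interpret M: prob_space M by fact
  interpret QM: pair_prob_space Q M by unfold_locales
  from Suc obtain \<omega> where \<omega>S: "\<forall>j\<in>{1..k}. \<omega> j \<in> S" and
    IH: "(\<integral>x. (\<Sum>j=1..k. f (\<omega> j) x)\<^sup>2 \<partial>M) + c * (\<Sum>j=1..k. \<tau> (\<omega> j)) \<le> real k * (L\<^sup>2 + c * (\<integral>\<omega>. \<tau> \<omega> \<partial>Q))"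
    by blast
  define D where "D x = (\<Sum>j=1..k. f (\<omega> j) x)" for x
  have L0: "0 \<le> L" using fb[of undefined undefined] by linarith
  have fmx[measurable]: "f \<nu> \<in> borel_measurable M" if "\<nu> \<in> space Q" for \<nu>
    using measurable_Pair2[OF fm that] by simp
  have fmw[measurable]: "(\<lambda>\<nu>. f \<nu> x) \<in> borel_measurable Q" if "x \<in> space M" for x
    using measurable_Pair1[OF fm that] by simp
  have Dm[measurable]: "D \<in> borel_measurable M"
    unfolding D_def using \<omega>S SQ by (intro borel_measurable_sum fmx) auto
  have Db: "\<bar>D x\<bar> \<le> real k * L" for x
  proof -
    have "\<bar>D x\<bar> \<le> (\<Sum>j=1..k. \<bar>f (\<omega> j) x\<bar>)" unfolding D_def by (rule sum_abs)
    also have "\<dots> \<le> (\<Sum>j=1..k. L)" by (intro sum_mono fb)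
    finally show ?thesis by simp
  qed
  define \<phi> where "\<phi> \<nu> = (\<integral>x. D x * f \<nu> x \<partial>M)" for \<nu>
  define F where "F \<nu> = (\<integral>x. (D x + f \<nu> x)\<^sup>2 \<partial>M) + c * \<tau> \<nu>" for \<nu>
  have Fle: "F \<nu> \<le> (\<integral>x. (D x)\<^sup>2 \<partial>M) + 2 * \<phi> \<nu> + L\<^sup>2 + c * \<tau> \<nu>" if "\<nu> \<in> space Q" for \<nu>
  proof -
    have i1: "integrable M (\<lambda>x. (D x)\<^sup>2)"
      by (rule M.integrable_const_bound[where B="(real k * L)\<^sup>2"])
         (use L0 in \<open>auto simp: abs_le_square_iff[symmetric] Db abs_mult\<close>)
    have i2: "integrable M (\<lambda>x. D x * f \<nu> x)"
    proof (rule M.integrable_const_bound[where B="(real k * L) * L"])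
      show "AE x in M. norm (D x * f \<nu> x) \<le> real k * L * L"
        using L0 by (auto simp: abs_mult intro!: AE_I2 mult_mono Db fb)
      show "(\<lambda>x. D x * f \<nu> x) \<in> borel_measurable M" using fmx[OF that] by measurable
    qed
    have i3: "integrable M (\<lambda>x. (f \<nu> x)\<^sup>2)"
      by (rule M.integrable_const_bound[where B="L\<^sup>2"])
         (use L0 in \<open>auto simp: abs_le_square_iff[symmetric] fb that\<close>)
    have "(\<integral>x. (D x + f \<nu> x)\<^sup>2 \<partial>M) = (\<integral>x. (D x)\<^sup>2 + 2 * (D x * f \<nu> x) + (f \<nu> x)\<^sup>2 \<partial>M)"
      by (intro Bochner_Integration.integral_cong) (auto simp: power2_sum algebra_simps)
    also have "\<dots> = (\<integral>x. (D x)\<^sup>2 \<partial>M) + 2 * \<phi> \<nu> + (\<integral>x. (f \<nu> x)\<^sup>2 \<partial>M)"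
      using i1 i2 i3 by (simp add: \<phi>_def)
    also have "(\<integral>x. (f \<nu> x)\<^sup>2 \<partial>M) \<le> (\<integral>x. L\<^sup>2 \<partial>M)"
      using i3 L0 by (intro integral_mono) (auto simp: abs_le_square_iff[symmetric] fb)
    finally show ?thesis by (simp add: F_def M.prob_space)
  qed
  have \<phi>m[measurable]: "\<phi> \<in> borel_measurable Q"
    unfolding \<phi>_def by measurable
  have \<phi>b: "\<bar>\<phi> \<nu>\<bar> \<le> real k * L * L" for \<nu>
  proof -
    have "\<bar>\<phi> \<nu>\<bar> \<le> (\<integral>x. \<bar>D x * f \<nu> x\<bar> \<partial>M)" unfolding \<phi>_def by (rule integral_abs_bound)
    also have "\<dots> \<le> (\<integral>x. real k * L * L \<partial>M)"
      using L0 by (intro integral_mono_AE' AE_I2) (auto simp: abs_mult intro!: mult_mono Db fb)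
    finally show ?thesis by (simp add: M.prob_space)
  qed
  have \<phi>i: "integrable Q \<phi>"
    by (rule Q.integrable_const_bound[where B="real k * L * L"]) (auto simp: \<phi>b)
  have \<phi>0: "(\<integral>\<nu>. \<phi> \<nu> \<partial>Q) = 0"
  proof -
    have int: "integrable (Q \<Otimes>\<^sub>M M) (\<lambda>(\<nu>, x). D x * f \<nu> x)"
      by (rule QM.P.integrable_const_bound[where B="(real k * L) * L"])
         (use L0 in \<open>auto simp: abs_mult split: prod.splits intro!: AE_I2 mult_mono Db fb\<close>)
    have "(\<integral>\<nu>. \<phi> \<nu> \<partial>Q) = (\<integral>x. (\<integral>\<nu>. D x * f \<nu> x \<partial>Q) \<partial>M)"
      unfolding \<phi>_def using QM.Fubini_integral[OF int] by simp
    also have "\<dots> = (\<integral>x. 0 \<partial>M)"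
      by (intro Bochner_Integration.integral_cong) (auto simp: f0)
    finally show ?thesis by simp
  qed
  have Fm: "F \<in> borel_measurable Q" unfolding F_def using \<tau>i by measurable
  have Fi: "integrable Q F"
  proof -
    have b: "\<bar>(\<integral>x. (D x + f \<nu> x)\<^sup>2 \<partial>M)\<bar> \<le> (real k * L + L)\<^sup>2" for \<nu>
    proof -
      have "\<bar>(\<integral>x. (D x + f \<nu> x)\<^sup>2 \<partial>M)\<bar> \<le> (\<integral>x. \<bar>(D x + f \<nu> x)\<^sup>2\<bar> \<partial>M)" by (rule integral_abs_bound)
      also have "\<dots> \<le> (\<integral>x. (real k * L + L)\<^sup>2 \<partial>M)"
      proof (intro integral_mono_AE' AE_I2)
        fix x
        have "\<bar>D x + f \<nu> x\<bar> \<le> real k * L + L" using Db[of x] fb[of \<nu> x] by linarith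
        then show "\<bar>(D x + f \<nu> x)\<^sup>2\<bar> \<le> (real k * L + L)\<^sup>2"
          by (simp add: abs_le_square_iff[symmetric])
      qed (simp_all add: L0)
      finally show ?thesis by (simp add: M.prob_space)
    qed
    have "integrable Q (\<lambda>\<nu>. (\<integral>x. (D x + f \<nu> x)\<^sup>2 \<partial>M))"
    proof (rule Q.integrable_const_bound[where B="(real k * L + L)\<^sup>2"])
      show "AE \<nu> in Q. norm (\<integral>x. (D x + f \<nu> x)\<^sup>2 \<partial>M) \<le> (real k * L + L)\<^sup>2"
        using b by (intro AE_I2) (simp only: real_norm_def)
    qed measurable
    then show ?thesis unfolding F_def using \<tau>i by auto
  qed
  have "(\<integral>\<nu>. F \<nu> \<partial>Q) \<le> (\<integral>\<nu>. (\<integral>x. (D x)\<^sup>2 \<partial>M) + 2 * \<phi> \<nu> + L\<^sup>2 + c * \<tau> \<nu> \<partial>Q)"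
    using Fle \<phi>i \<tau>i Fi by (intro integral_mono) auto
  also have "\<dots> = (\<integral>x. (D x)\<^sup>2 \<partial>M) + 2 * (\<integral>\<nu>. \<phi> \<nu> \<partial>Q) + L\<^sup>2 + c * (\<integral>\<nu>. \<tau> \<nu> \<partial>Q)"
    using \<phi>i \<tau>i by (simp add: Q.prob_space)
  finally have EF: "(\<integral>\<nu>. F \<nu> \<partial>Q) \<le> (\<integral>x. (D x)\<^sup>2 \<partial>M) + L\<^sup>2 + c * (\<integral>\<nu>. \<tau> \<nu> \<partial>Q)"
    using \<phi>0 by simp
  obtain \<nu> where \<nu>S: "\<nu> \<in> S" and F\<nu>: "F \<nu> \<le> (\<integral>\<nu>. F \<nu> \<partial>Q)"
    using exists_le_integral[OF Qp Fi S] by blast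
  define \<omega>' where "\<omega>' = fun_upd \<omega> (Suc k) \<nu>"
  have s1: "(\<Sum>j=1..Suc k. f (\<omega>' j) x) = D x + f \<nu> x" for x
    unfolding D_def \<omega>'_def by (simp add: sum.cl_ivl_Suc)
  have s2: "(\<Sum>j=1..Suc k. \<tau> (\<omega>' j)) = (\<Sum>j=1..k. \<tau> (\<omega> j)) + \<tau> \<nu>"
    unfolding \<omega>'_def by (simp add: sum.cl_ivl_Suc)
  show ?case
  proof (intro exI conjI)
    show "\<forall>j\<in>{1..Suc k}. \<omega>' j \<in> S" using \<omega>S \<nu>S by (auto simp: \<omega>'_def)
    have "(\<integral>x. (\<Sum>j=1..Suc k. f (\<omega>' j) x)\<^sup>2 \<partial>M) + c * (\<Sum>j=1..Suc k. \<tau> (\<omega>' j))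
        = F \<nu> + c * (\<Sum>j=1..k. \<tau> (\<omega> j))" unfolding s1 s2 F_def by (simp add: algebra_simps)
    also have "\<dots> \<le> real k * (L\<^sup>2 + c * (\<integral>\<omega>. \<tau> \<omega> \<partial>Q)) + (L\<^sup>2 + c * (\<integral>\<nu>. \<tau> \<nu> \<partial>Q))"
      using F\<nu> EF IH unfolding D_def by linarith
    finally show "(\<integral>x. (\<Sum>j=1..Suc k. f (\<omega>' j) x)\<^sup>2 \<partial>M) + c * (\<Sum>j=1..Suc k. \<tau> (\<omega>' j))
        \<le> real (Suc k) * (L\<^sup>2 + c * (\<integral>\<omega>. \<tau> \<omega> \<partial>Q))" by (simp add: algebra_simps)
  qed
qed



lemma polish_generator:
  obtains E :: "'a::polish_space set set" where "countable E" "Int_stable E" "UNIV \<in> E"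
    "sets (borel :: 'a measure) = sigma_sets UNIV E"
proof -
  obtain B :: "'a set set" where B: "countable B" "topological_basis B"
    using ex_countable_basis by blast
  define E where "E = Inter ` {S. finite S \<and> S \<subseteq> B}"
  have "countable E" unfolding E_def using countable_Collect_finite_subset[OF B(1)] by auto
  moreover have "Int_stable E"
    unfolding Int_stable_def E_def
  proof safe
    fix S T assume "finite S" "S \<subseteq> B" "finite T" "T \<subseteq> B"
    then show "\<Inter> S \<inter> \<Inter> T \<in> Inter ` {S. finite S \<and> S \<subseteq> B}"
      by (intro image_eqI[where x="S \<union> T"]) auto
  qed
  moreover have "UNIV \<in> E" unfolding E_def by (intro image_eqI[where x="{}"]) auto
  moreover have "sets (borel :: 'a measure) = sigma_sets UNIV E"
  proof
    have "sets (borel :: 'a measure) = sigma_sets UNIV B"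
      by (subst borel_eq_countable_basis[OF B]) simp
    also have "\<dots> \<subseteq> sigma_sets UNIV E"
      by (intro sigma_sets_subseteq) (force simp: E_def intro: image_eqI[where x="{_}"])
    finally show "sets (borel :: 'a measure) \<subseteq> sigma_sets UNIV E" .
    have "E \<subseteq> sets borel"
      unfolding E_def using topological_basis_open[OF B(2)] by (auto intro!: borel_open open_Inter)
    then show "sigma_sets UNIV E \<subseteq> sets (borel :: 'a measure)"
      using sets.sigma_sets_subset[of E borel] by simp
  qed
  ultimately show ?thesis using that by blast
qed

lemma joint_density:
  fixes M :: "'a::polish_space measure" and P :: "'b measure" and K :: "'b \<Rightarrow> 'a measure"
  assumes M_borel: "sets M = sets borel" and M_prob: "prob_space M" and P_prob: "prob_space P"
    and K_kernel: "K \<in> P \<rightarrow>\<^sub>M prob_algebra M"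
    and ac: "\<And>C. C \<in> null_sets (P \<Otimes>\<^sub>M M) \<Longrightarrow> AE \<omega> in P. emeasure (K \<omega>) (Pair \<omega> -` C) = 0"
  shows "\<exists>H. H \<in> borel_measurable (P \<Otimes>\<^sub>M M) \<and> (\<forall>z. 0 \<le> H z) \<and>
     (\<exists>G\<in>sets P. emeasure P G = 1 \<and> (\<forall>\<omega>\<in>G. K \<omega> = density M (\<lambda>x. ennreal (H (\<omega>, x)))))"
proof -
  interpret P: prob_space P by fact
  interpret M: prob_space M by fact
  interpret PM: pair_prob_space P M by unfold_locales
  have KS[measurable]: "K \<in> P \<rightarrow>\<^sub>M subprob_algebra M" using K_kernel by (rule measurable_prob_algebraD)
  have Kx: "sets (K \<omega>) = sets M" "prob_space (K \<omega>)" if "\<omega> \<in> space P" for \<omega>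
    using measurable_space[OF K_kernel that] by (auto simp: space_prob_algebra)
  have Ksp: "space (K \<omega>) = space M" if "\<omega> \<in> space P" for \<omega>
    using Kx(1)[OF that] by (rule sets_eq_imp_space_eq)
  define Q where "Q = P \<Otimes>\<^sub>M M"
  define \<pi> where "\<pi> = P \<bind> (\<lambda>\<omega>. distr (K \<omega>) Q (Pair \<omega>))"
  have kern: "(\<lambda>\<omega>. distr (K \<omega>) Q (Pair \<omega>)) \<in> P \<rightarrow>\<^sub>M subprob_algebra Q"
    unfolding Q_def by (rule measurable_distr2[OF _ KS]) simp
  have Pne: "space P \<noteq> {}" by (rule P.not_empty)
  have sets\<pi>: "sets \<pi> = sets Q"
    unfolding \<pi>_def by (rule sets_bind[OF _ Pne]) simp
  have Pair_meas: "Pair \<omega> \<in> K \<omega> \<rightarrow>\<^sub>M Q" if "\<omega> \<in> space P" for \<omega>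
    unfolding Q_def using measurable_Pair1'[OF that, of M] by (simp cong: measurable_cong_sets add: Kx(1)[OF that])
  have piC: "emeasure \<pi> C = (\<integral>\<^sup>+\<omega>. emeasure (K \<omega>) (Pair \<omega> -` C \<inter> space M) \<partial>P)" if C: "C \<in> sets Q" for C
    unfolding \<pi>_def
    by (subst emeasure_bind[OF Pne kern C], intro nn_integral_cong)
       (simp add: emeasure_distr[OF Pair_meas C] Ksp)
  have "absolutely_continuous Q \<pi>"
    unfolding absolutely_continuous_def
  proof
    fix C assume C: "C \<in> null_sets Q"
    then have Cs: "C \<in> sets Q" by auto
    have sub: "Pair \<omega> -` C \<inter> space M = Pair \<omega> -` C" if "\<omega> \<in> space P" for \<omega>
      using sets.sets_into_space[OF Cs] by (auto simp: Q_def space_pair_measure)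
    have "emeasure \<pi> C = 0"
    proof -
      have "(\<integral>\<^sup>+\<omega>. emeasure (K \<omega>) (Pair \<omega> -` C \<inter> space M) \<partial>P) = 0"
      proof (subst nn_integral_0_iff_AE)
        show "(\<lambda>\<omega>. emeasure (K \<omega>) (Pair \<omega> -` C \<inter> space M)) \<in> borel_measurable P"
        proof (rule emeasure_measurable_subprob_algebra2[OF _ KS])
          have "(SIGMA \<omega>:space P. Pair \<omega> -` C \<inter> space M) = C"
            using sets.sets_into_space[OF Cs] by (auto simp: Q_def space_pair_measure)
          then show "(SIGMA \<omega>:space P. Pair \<omega> -` C \<inter> space M) \<in> sets (P \<Otimes>\<^sub>M M)" using Cs by (simp add: Q_def)
        qed
        show "AE \<omega> in P. emeasure (K \<omega>) (Pair \<omega> -` C \<inter> space M) = 0"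
          using ac[OF C[unfolded Q_def]] by (rule AE_mp) (auto intro!: AE_I2 simp: sub)
      qed
      then show ?thesis using piC[OF Cs] by simp
    qed
    then show "C \<in> null_sets \<pi>" using Cs sets\<pi> by auto
  qed
  define h where "h = RN_deriv Q \<pi>"
  have hm[measurable]: "h \<in> borel_measurable (P \<Otimes>\<^sub>M M)" unfolding h_def Q_def by simp
  have dens: "density Q h = \<pi>"
    unfolding h_def Q_def
    by (rule PM.density_RN_deriv) (use \<open>absolutely_continuous Q \<pi>\<close> sets\<pi> in \<open>auto simp: Q_def\<close>)
  have hB: "AE \<omega> in P. emeasure (K \<omega>) B = (\<integral>\<^sup>+x. h (\<omega>, x) * indicator B x \<partial>M)" if B[measurable]: "B \<in> sets M" for B
  proof (rule P.density_unique_finite_measure)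
    show "(\<lambda>\<omega>. emeasure (K \<omega>) B) \<in> borel_measurable P" by measurable
    show "(\<lambda>\<omega>. \<integral>\<^sup>+x. h (\<omega>, x) * indicator B x \<partial>M) \<in> borel_measurable P" by measurable
    fix A assume A[measurable]: "A \<in> sets P"
    have AB: "A \<times> B \<in> sets Q" unfolding Q_def by simp
    have "(\<integral>\<^sup>+\<omega>. emeasure (K \<omega>) B * indicator A \<omega> \<partial>P) = emeasure \<pi> (A \<times> B)"
      unfolding piC[OF AB] using sets.sets_into_space[OF B]
      by (intro nn_integral_cong) (auto split: split_indicator simp: Int_absorb2)
    also have "\<dots> = emeasure (density Q h) (A \<times> B)" by (simp add: dens)
    also have "\<dots> = (\<integral>\<^sup>+z. h z * indicator (A \<times> B) z \<partial>Q)"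
      using AB by (subst emeasure_density) (auto simp: Q_def)
    also have "\<dots> = (\<integral>\<^sup>+\<omega>. (\<integral>\<^sup>+x. h (\<omega>, x) * indicator (A \<times> B) (\<omega>, x) \<partial>M) \<partial>P)"
      unfolding Q_def by (rule M.nn_integral_fst[symmetric]) simp
    also have "\<dots> = (\<integral>\<^sup>+\<omega>. (\<integral>\<^sup>+x. h (\<omega>, x) * indicator B x \<partial>M) * indicator A \<omega> \<partial>P)"
      by (intro nn_integral_cong) (auto split: split_indicator simp: indicator_times)
    finally show "(\<integral>\<^sup>+\<omega>. emeasure (K \<omega>) B * indicator A \<omega> \<partial>P) = (\<integral>\<^sup>+\<omega>. (\<integral>\<^sup>+x. h (\<omega>, x) * indicator B x \<partial>M) * indicator A \<omega> \<partial>P)" .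
  qed auto
  obtain E :: "'a set set" where E: "countable E" "Int_stable E" "UNIV \<in> E" "sets (borel :: 'a measure) = sigma_sets UNIV E"
    by (rule polish_generator)
  have EM: "e \<in> sets M" if "e \<in> E" for e using that E(4) M_borel by auto
  have "AE \<omega> in P. \<forall>e\<in>E. emeasure (K \<omega>) e = (\<integral>\<^sup>+x. h (\<omega>, x) * indicator e x \<partial>M)"
    using E(1) by (subst AE_ball_countable) (auto intro!: hB EM)
  then obtain N where N: "{\<omega>\<in>space P. \<not> (\<forall>e\<in>E. emeasure (K \<omega>) e = (\<integral>\<^sup>+x. h (\<omega>, x) * indicator e x \<partial>M))} \<subseteq> N"
    "N \<in> null_sets P" by (rule AE_E) auto
  define G where "G = space P - N"
  have Gs: "G \<in> sets P" using N by (auto simp: G_def)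
  have G1: "emeasure P G = 1"
    unfolding G_def using N by (subst emeasure_compl) (auto simp: P.emeasure_space_1)
  have Kd: "K \<omega> = density M (\<lambda>x. h (\<omega>, x))" if \<omega>: "\<omega> \<in> G" for \<omega>
  proof -
    have \<omega>P: "\<omega> \<in> space P" using \<omega> by (auto simp: G_def)
    have eq: "emeasure (K \<omega>) e = (\<integral>\<^sup>+x. h (\<omega>, x) * indicator e x \<partial>M)" if "e \<in> E" for e
      using N(1) \<omega> that by (auto simp: G_def)
    interpret K: prob_space "K \<omega>" using Kx(2)[OF \<omega>P] .
    show ?thesis
    proof (rule measure_eqI_generator_eq[where E=E and \<Omega>=UNIV and A="\<lambda>_. UNIV"])
      show "Int_stable E" by fact
      show "E \<subseteq> Pow UNIV" by simp
      show "sets (K \<omega>) = sigma_sets UNIV E" using Kx(1)[OF \<omega>P] M_borel E(4) by simp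
      show "sets (density M (\<lambda>x. h (\<omega>, x))) = sigma_sets UNIV E" using M_borel E(4) by simp
      show "range (\<lambda>_. UNIV) \<subseteq> E" using E(3) by auto
      show "(\<Union>i::nat. UNIV) = UNIV" by simp
      show "\<And>i::nat. emeasure (K \<omega>) UNIV \<noteq> \<infinity>" by simp
      fix X assume X: "X \<in> E"
      show "emeasure (K \<omega>) X = emeasure (density M (\<lambda>x. h (\<omega>, x))) X"
        using eq[OF X] EM[OF X] \<omega>P by (simp add: emeasure_density)
    qed
  qed
  define H where "H z = enn2real (h z)" for z
  have Hm: "H \<in> borel_measurable (P \<Otimes>\<^sub>M M)" unfolding H_def by measurable
  have Kd': "K \<omega> = density M (\<lambda>x. ennreal (H (\<omega>, x)))" if \<omega>: "\<omega> \<in> G" for \<omega>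
  proof -
    have \<omega>P: "\<omega> \<in> space P" using \<omega> by (auto simp: G_def)
    interpret K: prob_space "K \<omega>" using Kx(2)[OF \<omega>P] .
    have "(\<integral>\<^sup>+x. h (\<omega>, x) \<partial>M) = emeasure (density M (\<lambda>x. h (\<omega>, x))) (space M)"
      using \<omega>P by (simp add: emeasure_density)
    also have "\<dots> = emeasure (K \<omega>) (space M)" using Kd[OF \<omega>] by simp
    also have "\<dots> \<noteq> \<infinity>" by simp
    finally have "AE x in M. h (\<omega>, x) \<noteq> \<infinity>" using \<omega>P by (intro nn_integral_PInf_AE) auto
    then have "AE x in M. h (\<omega>, x) = ennreal (H (\<omega>, x))"
      by eventually_elim (simp add: H_def less_top[symmetric])
    then have "density M (\<lambda>x. h (\<omega>, x)) = density M (\<lambda>x. ennreal (H (\<omega>, x)))"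
      using \<omega>P Hm by (intro density_cong) auto
    then show ?thesis using Kd[OF \<omega>] by simp
  qed
  show ?thesis
    using Hm Gs G1 Kd' by (intro exI[of _ H]) (auto simp: H_def)
qed



lemma ac_from_KL:
  fixes M :: "'a measure" and P :: "'b measure" and K :: "'b \<Rightarrow> 'a measure"
  assumes M_prob: "prob_space M" and P_prob: "prob_space P"
    and K_kernel: "K \<in> P \<rightarrow>\<^sub>M prob_algebra M"
    and I_fin: "(\<integral>\<^sup>+ \<omega>. KL_div (K \<omega>) M \<partial>P) < \<top>"
    and C: "C \<in> null_sets (P \<Otimes>\<^sub>M M)"
  shows "AE \<omega> in P. emeasure (K \<omega>) (Pair \<omega> -` C) = 0"
proof -
  interpret P: prob_space P by fact
  interpret M: prob_space M by fact
  interpret PM: pair_prob_space P M by unfold_locales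
  have KS[measurable]: "K \<in> P \<rightarrow>\<^sub>M subprob_algebra M" using K_kernel by (rule measurable_prob_algebraD)
  have Kx: "sets (K \<omega>) = sets M" "prob_space (K \<omega>)" if "\<omega> \<in> space P" for \<omega>
    using measurable_space[OF K_kernel that] by (auto simp: space_prob_algebra)
  have Cs[measurable]: "C \<in> sets (P \<Otimes>\<^sub>M M)" and C0: "emeasure (P \<Otimes>\<^sub>M M) C = 0" using C by auto
  have sub: "Pair \<omega> -` C \<inter> space M = Pair \<omega> -` C" if "\<omega> \<in> space P" for \<omega>
    using sets.sets_into_space[OF Cs] that by (auto simp: space_pair_measure)
  have Sig: "(SIGMA \<omega>:space P. Pair \<omega> -` C \<inter> space M) = C"
    using sets.sets_into_space[OF Cs] by (auto simp: space_pair_measure)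
  have fm[measurable]: "(\<lambda>\<omega>. emeasure (K \<omega>) (Pair \<omega> -` C \<inter> space M)) \<in> borel_measurable P"
    by (rule emeasure_measurable_subprob_algebra2[OF _ KS]) (simp only: Sig Cs)
  have gm[measurable]: "(\<lambda>\<omega>. emeasure M (Pair \<omega> -` C)) \<in> borel_measurable P"
    by (rule M.measurable_emeasure_Pair[OF Cs])
  have AEM: "AE \<omega> in P. emeasure M (Pair \<omega> -` C) = 0"
    using C0 unfolding M.emeasure_pair_measure_alt[OF Cs] by (subst (asm) nn_integral_0_iff_AE) auto
  define Y where "Y = {\<omega>\<in>space P. emeasure (K \<omega>) (Pair \<omega> -` C \<inter> space M) \<noteq> 0 \<and> emeasure M (Pair \<omega> -` C) = 0}"
  have Ys: "Y \<in> sets P" unfolding Y_def by measurable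
  have KLY: "KL_div (K \<omega>) M = \<top>" if "\<omega> \<in> Y" for \<omega>
  proof -
    have \<omega>P: "\<omega> \<in> space P" using that by (auto simp: Y_def)
    have "\<not> absolutely_continuous M (K \<omega>)"
    proof
      assume ac: "absolutely_continuous M (K \<omega>)"
      have "Pair \<omega> -` C \<in> null_sets M" using that \<omega>P by (auto simp: Y_def)
      then have "Pair \<omega> -` C \<in> null_sets (K \<omega>)" using ac by (auto simp: absolutely_continuous_def)
      then show False using that \<omega>P by (auto simp: Y_def sub)
    qed
    then show ?thesis by (simp add: KL_div_def)
  qed
  have "(\<integral>\<^sup>+\<omega>. \<top> * indicator Y \<omega> \<partial>P) \<le> (\<integral>\<^sup>+ \<omega>. KL_div (K \<omega>) M \<partial>P)"
    by (intro nn_integral_mono) (auto split: split_indicator simp: KLY)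
  also have "\<dots> < \<top>" by (rule I_fin)
  finally have "\<top> * emeasure P Y < \<top>" using Ys by (subst (asm) nn_integral_cmult_indicator) auto
  then have "emeasure P Y = 0" by (auto simp: ennreal_mult_less_top)
  then have "AE \<omega> in P. \<omega> \<notin> Y" using Ys by (intro AE_not_in) auto
  then show ?thesis using AEM AE_space
  proof eventually_elim
    case (elim \<omega>) then show ?case by (auto simp: Y_def sub)
  qed
qed

lemma KL_tail:
  fixes M :: "'a measure" and H :: "'a \<Rightarrow> real"
  assumes M_prob: "prob_space M" and Hm[measurable]: "H \<in> borel_measurable M" and H0: "\<And>x. 0 \<le> H x"
    and N: "N = density M (\<lambda>x. ennreal (H x))" and N_prob: "prob_space N" and L: "1 < L"
  shows "integrable M H"
    and "ennreal ((\<integral>x. (if L < H x then H x else 0) \<partial>M) * ln L) \<le> KL_div N M + 1"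
proof -
  interpret M: prob_space M by fact
  interpret N: prob_space N by fact
  have "(\<integral>\<^sup>+x. ennreal (H x) \<partial>M) = emeasure N (space M)"
    unfolding N by (simp add: emeasure_density)
  also have "\<dots> = 1" using N.emeasure_space_1 unfolding N by simp
  finally have H1: "(\<integral>\<^sup>+x. ennreal (H x) \<partial>M) = 1" .
  show Hi: "integrable M H" using H1 H0 by (intro integrableI_nonneg) auto
  have sN: "sets N = sets M" unfolding N by simp
  have acN: "absolutely_continuous M N" unfolding N by (intro absolutely_continuousI_density) simp
  have "AE x in M. ennreal (H x) = RN_deriv M N x"
    by (rule M.RN_deriv_unique) (auto simp: N)
  then have AEH: "AE x in M. enn2real (RN_deriv M N x) = H x"
    by eventually_elim (use H0 in \<open>metis enn2real_ennreal\<close>)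
  define A where "A = (\<integral>\<^sup>+x. ennreal (H x * ln (H x)) \<partial>M)"
  define B where "B = (\<integral>\<^sup>+x. ennreal (- (H x * ln (H x))) \<partial>M)"
  have KL: "KL_div N M = A - B"
  proof -
    have "KL_div N M = (\<integral>\<^sup>+ x. ennreal (enn2real (RN_deriv M N x) * ln (enn2real (RN_deriv M N x))) \<partial>M)
       - (\<integral>\<^sup>+ x. ennreal (- (enn2real (RN_deriv M N x) * ln (enn2real (RN_deriv M N x)))) \<partial>M)"
      using sN acN by (simp add: KL_div_def Let_def)
    also have "\<dots> = A - B" unfolding A_def B_def
      by (intro arg_cong2[where f="(-)"] nn_integral_cong_AE; use AEH in \<open>eventually_elim\<close>) simp_all
    finally show ?thesis .
  qed
  have B1: "B \<le> 1"
  proof -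
    have pt: "- (H x * ln (H x)) \<le> 1" for x
    proof (cases "H x = 0")
      case False
      then have hp: "0 < H x" using H0[of x] by simp
      have "ln (1 / H x) \<le> 1 / H x - 1" using hp by (intro ln_le_minus_one) simp
      then have "- ln (H x) \<le> 1 / H x - 1" using hp by (simp add: ln_div)
      then have "H x * (- ln (H x)) \<le> H x * (1 / H x - 1)" using hp by (intro mult_left_mono) auto
      then show ?thesis using hp H0[of x] by (simp add: algebra_simps)
    qed simp
    have "B \<le> (\<integral>\<^sup>+x. 1 \<partial>M)" unfolding B_def
      by (intro nn_integral_mono) (use pt in \<open>simp add: ennreal_le_1\<close>)
    then show ?thesis by (simp add: M.emeasure_space_1)
  qed
  define r where "r x = (if L < H x then H x else 0)" for x
  have rm[measurable]: "r \<in> borel_measurable M" unfolding r_def by measurable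
  have ri: "integrable M r"
    by (rule Bochner_Integration.integrable_bound[OF Hi]) (auto simp: r_def H0 intro!: AE_I2)
  have "ennreal ((\<integral>x. r x \<partial>M) * ln L) = ennreal (\<integral>x. r x * ln L \<partial>M)" by simp
  also have "\<dots> = (\<integral>\<^sup>+x. ennreal (r x * ln L) \<partial>M)"
  proof (rule nn_integral_eq_integral[symmetric])
    show "integrable M (\<lambda>x. r x * ln L)" using ri by simp
    show "AE x in M. 0 \<le> r x * ln L" using L by (auto simp: r_def H0 intro!: AE_I2)
  qed
  also have "\<dots> \<le> A" unfolding A_def
  proof (intro nn_integral_mono)
    fix x show "ennreal (r x * ln L) \<le> ennreal (H x * ln (H x))"
    proof (cases "L < H x")
      case True
      then show ?thesis using L by (auto simp: r_def intro!: ennreal_leI mult_left_mono)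
    next
      case False
      then show ?thesis by (simp add: r_def)
    qed
  qed
  also have "A \<le> (A - B) + B"
  proof (cases "B \<le> A")
    case True then show ?thesis by (simp add: diff_add_cancel_ennreal)
  next
    case False then have "A \<le> B" by simp
    also have "B \<le> (A - B) + B" by (simp add: add_increasing)
    finally show ?thesis .
  qed
  also have "\<dots> \<le> KL_div N M + 1" unfolding KL using B1 by (intro add_left_mono)
  finally show "ennreal ((\<integral>x. (if L < H x then H x else 0) \<partial>M) * ln L) \<le> KL_div N M + 1"
    unfolding r_def .
qed



lemma sq_int_le:
  fixes S :: "'a \<Rightarrow> real"
  assumes "prob_space M" "S \<in> borel_measurable M" "integrable M (\<lambda>x. (S x)\<^sup>2)" "integrable M S"
  shows "(\<integral>x. \<bar>S x\<bar> \<partial>M)\<^sup>2 \<le> (\<integral>x. (S x)\<^sup>2 \<partial>M)"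
proof -
  interpret prob_space M by fact
  have "0 \<le> variance (\<lambda>x. \<bar>S x\<bar>)" by (rule variance_positive)
  also have "variance (\<lambda>x. \<bar>S x\<bar>) = expectation (\<lambda>x. (\<bar>S x\<bar>)\<^sup>2) - (expectation (\<lambda>x. \<bar>S x\<bar>))\<^sup>2"
    using assms by (intro variance_eq) auto
  finally show ?thesis by simp
qed

lemma sum_indicator_partition:
  assumes "finite \<A>" "disjoint \<A>" "\<Union>\<A> = X" "x \<in> X"
  shows "(\<Sum>A\<in>\<A>. indicator A x :: real) = 1"
proof -
  obtain A0 where A0: "A0 \<in> \<A>" "x \<in> A0" using assms by auto
  have "(\<Sum>A\<in>\<A>. indicator A x :: real) = (\<Sum>A\<in>\<A>. if A = A0 then 1 else 0)"
  proof (intro sum.cong refl)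
    fix A assume "A \<in> \<A>"
    then show "indicator A x = (if A = A0 then 1 else (0::real))"
      using A0 assms(2) by (auto simp: indicator_def disjoint_def)
  qed
  also have "\<dots> = 1" using A0 assms(1) by simp
  finally show ?thesis .
qed

lemma numeric_final:
  fixes \<epsilon> p I lnL L2 m E c a T :: real
  assumes eps: "0 < \<epsilon>" "\<epsilon> < 1/2" and p: "1 - \<epsilon>/2 < p" "p \<le> 1" and I0: "0 \<le> I"
    and lnL: "lnL = 8 * (I + 1) / \<epsilon>" and L2: "0 < L2" and m: "16 / \<epsilon>\<^sup>2 * L2 \<le> m"
    and E0: "0 \<le> E" and Eb: "E * p * lnL \<le> I + 1" and c: "c = 6 * L2 / \<epsilon>"
    and a0: "0 \<le> a" and a: "a\<^sup>2 \<le> (L2 + c * E) / m" and T: "T / m \<le> L2 / c + E"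
  shows "a + T / m + E + 2 * (1 - p) < 3 * \<epsilon>"
proof -
  have p34: "3/4 < p" using p eps by simp
  have lnL0: "0 < lnL" using lnL I0 eps by simp
  have "(E * p * 8 / \<epsilon>) * (I + 1) \<le> 1 * (I + 1)" using Eb unfolding lnL by (simp add: algebra_simps)
  then have "E * p * 8 / \<epsilon> \<le> 1" using I0 mult_right_le_imp_le[of "E * p * 8 / \<epsilon>" "I + 1" 1] by linarith
  then have "E \<le> \<epsilon> / (8 * p)" using eps p34 by (simp add: field_simps)
  also have "\<dots> < \<epsilon> / 6" using eps p34 by (simp add: field_simps)
  finally have E6: "E < \<epsilon> / 6" .
  have c0: "0 < c" using c L2 eps by simp
  have Lc: "L2 / c = \<epsilon> / 6" unfolding c using L2 eps by (simp add: field_simps)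
  have m0: "0 < m" using m L2 eps by (smt (verit) divide_pos_pos mult_pos_pos zero_less_power)
  have Lm: "L2 / m \<le> \<epsilon>\<^sup>2 / 16" using m m0 eps by (simp add: field_simps)
  have "(L2 + c * E) / m = (L2 / m) * (1 + 6 * E / \<epsilon>)" unfolding c using eps m0 by (simp add: field_simps)
  also have "\<dots> \<le> (\<epsilon>\<^sup>2 / 16) * 2"
  proof (rule mult_mono)
    show "1 + 6 * E / \<epsilon> \<le> 2" using E6 eps by (simp add: field_simps)
  qed (use Lm L2 m0 E0 eps in auto)
  finally have "(L2 + c * E) / m \<le> \<epsilon>\<^sup>2 / 8" by simp
  then have "a\<^sup>2 \<le> \<epsilon>\<^sup>2 / 8" using a by linarith
  then have "a < \<epsilon> / 2"
  proof -
    assume h: "a\<^sup>2 \<le> \<epsilon>\<^sup>2 / 8"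
    show ?thesis
    proof (rule ccontr)
      assume "\<not> a < \<epsilon> / 2"
      then have "(\<epsilon>/2)\<^sup>2 \<le> a\<^sup>2" using eps by (intro power_mono) auto
      then have "\<epsilon>\<^sup>2 / 4 \<le> a\<^sup>2" by (simp add: power_divide)
      moreover have "0 < \<epsilon>\<^sup>2" using eps by simp
      ultimately show False using h by linarith
    qed
  qed
  moreover have "T / m \<le> \<epsilon> / 6 + E" using T Lc by simp
  ultimately have "a + T / m < \<epsilon> / 2 + \<epsilon> / 3" using E6 by linarith
  moreover have "2 * (1 - p) = 2 - 2 * p" by simp
  ultimately show ?thesis using E6 p eps by linarith
qed


lemma int_partition_sum:
  fixes \<phi> :: "'a \<Rightarrow> real"
  assumes "finite \<A>" "\<A> \<subseteq> sets N" "disjoint \<A>" "\<Union>\<A> = space N" "integrable N \<phi>"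
  shows "(\<Sum>A\<in>\<A>. \<integral>x. indicator A x * \<phi> x \<partial>N) = (\<integral>x. \<phi> x \<partial>N)"
proof -
  have "(\<Sum>A\<in>\<A>. \<integral>x. indicator A x * \<phi> x \<partial>N) = (\<integral>x. (\<Sum>A\<in>\<A>. indicator A x * \<phi> x) \<partial>N)"
  proof (rule Bochner_Integration.integral_sum[where f="\<lambda>A x. indicator A x * \<phi> x", symmetric])
    fix A assume "A \<in> \<A>"
    then show "integrable N (\<lambda>x. indicator A x * \<phi> x)"
      using assms integrable_real_mult_indicator[of A N \<phi>] by (auto simp: mult.commute)
  qed
  also have "\<dots> = (\<integral>x. \<phi> x \<partial>N)"
  proof (intro Bochner_Integration.integral_cong refl)
    fix x assume "x \<in> space N"
    then show "(\<Sum>A\<in>\<A>. indicator A x * \<phi> x) = \<phi> x"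
      using sum_indicator_partition[OF assms(1,3,4)] by (simp add: sum_distrib_right[symmetric])
  qed
  finally show ?thesis .
qed

lemma prob_partition_sum:
  assumes "prob_space N" "finite \<A>" "\<A> \<subseteq> sets N" "disjoint \<A>" "\<Union>\<A> = space N"
  shows "(\<Sum>A\<in>\<A>. measure N A) = 1"
proof -
  interpret prob_space N by fact
  have "(\<Sum>A\<in>\<A>. \<integral>x. indicator A x * (\<lambda>_. 1::real) x \<partial>N) = (\<integral>x. (\<lambda>_. 1::real) x \<partial>N)"
    using assms by (intro int_partition_sum) auto
  moreover have "(\<integral>x. indicator A x * 1 \<partial>N) = measure N A" if "A \<in> \<A>" for A
    using that assms(3) sets.sets_into_space by (auto simp: Int_absorb2)
  ultimately show ?thesis by (simp add: prob_space)
qed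

theorem proposition7p2:
  fixes M :: "'a::polish_space measure" and P :: "'b measure"
    and K :: "'b \<Rightarrow> 'a measure" and \<epsilon> :: real and \<Omega>1 :: "'b set"
  assumes M_borel: "sets M = sets borel"
    and M_prob: "prob_space M"
    and P_prob: "prob_space P"
    and K_kernel: "K \<in> P \<rightarrow>\<^sub>M prob_algebra M"
    and M_mix: "M = P \<bind> K"
    and eps: "0 < \<epsilon>" "\<epsilon> < 1/2"
    and \<Omega>1_meas: "\<Omega>1 \<in> sets P"
    and \<Omega>1_large: "measure P \<Omega>1 > 1 - \<epsilon>/2"
    and I_fin: "(\<integral>\<^sup>+ \<omega>. KL_div (K \<omega>) M \<partial>P) < \<top>"
  shows "let I = enn2real (\<integral>\<^sup>+ \<omega>. KL_div (K \<omega>) M \<partial>P);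
             m = nat \<lceil>16 / \<epsilon>\<^sup>2 * exp (16 * (I + 1) / \<epsilon>)\<rceil>
         in \<exists>\<omega>::nat \<Rightarrow> 'b. (\<forall>j\<in>{1..m}. \<omega> j \<in> \<Omega>1) \<and>
              tv_norm M (\<lambda>A. (1 / real m) * (\<Sum>j=1..m. measure (K (\<omega> j)) A) - measure M A)
                < 3 * \<epsilon>"
proof -
  interpret P: prob_space P by fact
  interpret M: prob_space M by fact
  interpret PM: pair_prob_space P M by unfold_locales
  have KS[measurable]: "K \<in> P \<rightarrow>\<^sub>M subprob_algebra M" using K_kernel by (rule measurable_prob_algebraD)
  have Kx: "sets (K \<omega>) = sets M" "prob_space (K \<omega>)" if "\<omega> \<in> space P" for \<omega>
    using measurable_space[OF K_kernel that] by (auto simp: space_prob_algebra)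
  define I where "I = enn2real (\<integral>\<^sup>+ \<omega>. KL_div (K \<omega>) M \<partial>P)"
  have Ieq: "(\<integral>\<^sup>+ \<omega>. KL_div (K \<omega>) M \<partial>P) = ennreal I" using I_fin by (simp add: I_def)
  have I0: "0 \<le> I" by (simp add: I_def)
  define m where "m = nat \<lceil>16 / \<epsilon>\<^sup>2 * exp (16 * (I + 1) / \<epsilon>)\<rceil>"
  obtain H G where Hm[measurable]: "H \<in> borel_measurable (P \<Otimes>\<^sub>M M)" and H0: "\<And>z. 0 \<le> H z"
    and Gs[measurable]: "G \<in> sets P" and G1: "emeasure P G = 1"
    and KG: "\<And>\<omega>. \<omega> \<in> G \<Longrightarrow> K \<omega> = density M (\<lambda>x. ennreal (H (\<omega>, x)))"
    using joint_density[OF M_borel M_prob P_prob K_kernel ac_from_KL[OF M_prob P_prob K_kernel I_fin]]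
    by blast
  have GP: "G \<subseteq> space P" using sets.sets_into_space[OF Gs] .
  define lnL where "lnL = 8 * (I + 1) / \<epsilon>"
  define L where "L = exp lnL"
  have lnL0: "0 < lnL" unfolding lnL_def using I0 eps by auto
  have L1: "1 < L" unfolding L_def using lnL0 by simp
  have lnLL: "ln L = lnL" unfolding L_def by simp
  have L2: "L\<^sup>2 = exp (16 * (I + 1) / \<epsilon>)"
    unfolding L_def lnL_def by (simp add: power2_eq_square exp_add[symmetric])
  define g where "g z = (if H z \<le> L then H z else 0)" for z
  define r where "r z = (if L < H z then H z else 0)" for z
  have gr: "H z = g z + r z" for z unfolding g_def r_def by auto
  have g0: "0 \<le> g z" "g z \<le> L" for z unfolding g_def using H0[of z] L1 by auto
  have r0: "0 \<le> r z" "r z \<le> H z" for z unfolding r_def using H0[of z] by auto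
  have gm[measurable]: "g \<in> borel_measurable (P \<Otimes>\<^sub>M M)" unfolding g_def by measurable
  have rm[measurable]: "r \<in> borel_measurable (P \<Otimes>\<^sub>M M)" unfolding r_def by measurable
  define t where "t \<omega> = (\<integral>x. r (\<omega>, x) \<partial>M)" for \<omega>
  have tm[measurable]: "t \<in> borel_measurable P" unfolding t_def by measurable
  have t0: "0 \<le> t \<omega>" for \<omega> unfolding t_def using r0 by (intro integral_nonneg_AE) auto
  have HGi: "integrable M (\<lambda>x. H (\<omega>, x))" and tKL: "ennreal (t \<omega> * lnL) \<le> KL_div (K \<omega>) M + 1"
    if "\<omega> \<in> G" for \<omega>
  proof -
    have \<omega>P: "\<omega> \<in> space P" using that GP by auto
    note * = KL_tail[OF M_prob _ H0 KG[OF that] Kx(2)[OF \<omega>P] L1]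
    show "integrable M (\<lambda>x. H (\<omega>, x))" using * \<omega>P by simp
    show "ennreal (t \<omega> * lnL) \<le> KL_div (K \<omega>) M + 1"
      using * \<omega>P by (simp add: t_def r_def lnLL)
  qed

  define \<Omega>2 where "\<Omega>2 = \<Omega>1 \<inter> G"
  have \<Omega>2s[measurable]: "\<Omega>2 \<in> sets P" unfolding \<Omega>2_def using \<Omega>1_meas Gs by auto
  have \<Omega>2G: "\<Omega>2 \<subseteq> G" "\<Omega>2 \<subseteq> \<Omega>1" unfolding \<Omega>2_def by auto
  define p where "p = measure P \<Omega>2"
  have cG: "measure P (space P - G) = 0"
    using G1 Gs by (simp add: P.prob_compl P.emeasure_eq_measure)
  have "measure P \<Omega>1 \<le> measure P (\<Omega>2 \<union> (space P - G))"
    using sets.sets_into_space[OF \<Omega>1_meas] \<Omega>1_meas Gs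
    by (intro P.finite_measure_mono) (auto simp: \<Omega>2_def)
  also have "\<dots> \<le> measure P \<Omega>2 + measure P (space P - G)"
    using Gs by (intro measure_Un_le) auto
  finally have p1: "1 - \<epsilon>/2 < p" using cG \<Omega>1_large by (simp add: p_def)
  have p2: "p \<le> 1" unfolding p_def by simp
  have p0: "0 < p" using p1 eps by simp
  define Q where "Q = uniform_measure P \<Omega>2"
  have eP2: "emeasure P \<Omega>2 = ennreal p" unfolding p_def by (simp add: P.emeasure_eq_measure)
  have Qp: "prob_space Q" unfolding Q_def using eP2 p0 by (intro prob_space_uniform_measure) auto
  interpret Q: prob_space Q by fact
  interpret QM: pair_prob_space Q M by unfold_locales
  have sQ[measurable_cong]: "sets Q = sets P" and spQ: "space Q = space P" unfolding Q_def by auto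
  have QAE: "AE \<omega> in Q. \<omega> \<in> \<Omega>2" unfolding Q_def by (intro AE_uniform_measureI) auto
  have \<Omega>2Q: "\<Omega>2 \<subseteq> space Q" using sets.sets_into_space[OF \<Omega>2s] spQ by auto
  have inv_p: "1 / ennreal p = ennreal (1/p)" using divide_ennreal[of 1 p] p0 by simp
  have Qd: "Q = density P (\<lambda>\<omega>. ennreal (indicator \<Omega>2 \<omega> / p))"
    unfolding Q_def uniform_measure_def eP2
    by (intro density_cong) (auto simp: inv_p split: split_indicator intro!: AE_I2)
  have Qint: "(\<integral>\<omega>. f \<omega> \<partial>Q) = (\<integral>\<omega>. indicator \<Omega>2 \<omega> * f \<omega> \<partial>P) / p"
    if [measurable]: "f \<in> borel_measurable P" for f :: "'b \<Rightarrow> real"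
    unfolding Qd using p0 by (subst integral_density) auto
  have Qintegrable: "integrable Q f \<longleftrightarrow> integrable P (\<lambda>\<omega>. indicator \<Omega>2 \<omega> * f \<omega> / p)"
    if [measurable]: "f \<in> borel_measurable P" for f :: "'b \<Rightarrow> real"
    unfolding Qd using p0 by (subst integrable_density) auto
  define \<phi> where "\<phi> \<omega> = ennreal (indicator \<Omega>2 \<omega> * t \<omega> * lnL)" for \<omega>
  have \<phi>m[measurable]: "\<phi> \<in> borel_measurable P" unfolding \<phi>_def by measurable
  have \<phi>KL: "\<phi> \<omega> - 1 \<le> KL_div (K \<omega>) M" for \<omega>
  proof (cases "\<omega> \<in> \<Omega>2")
    case True
    then have "\<phi> \<omega> - 1 \<le> (KL_div (K \<omega>) M + 1) - 1"
      using tKL[of \<omega>] \<Omega>2G by (intro ennreal_minus_mono) (auto simp: \<phi>_def)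
    then show ?thesis by simp
  qed (simp add: \<phi>_def)
  have "(\<integral>\<^sup>+\<omega>. \<phi> \<omega> \<partial>P) \<le> (\<integral>\<^sup>+\<omega>. (\<phi> \<omega> - 1) + 1 \<partial>P)"
  proof (intro nn_integral_mono)
    fix \<omega> show "\<phi> \<omega> \<le> \<phi> \<omega> - 1 + 1"
    proof (cases "1 \<le> \<phi> \<omega>")
      case True then show ?thesis by (simp add: diff_add_cancel_ennreal)
    next
      case False then have "\<phi> \<omega> \<le> 1" by simp
      also have "1 \<le> (\<phi> \<omega> - 1) + 1" by (simp add: add_increasing)
      finally show ?thesis .
    qed
  qed
  also have "\<dots> = (\<integral>\<^sup>+\<omega>. (\<phi> \<omega> - 1) \<partial>P) + (\<integral>\<^sup>+\<omega>. 1 \<partial>P)"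
    by (intro nn_integral_add) auto
  also have "\<dots> \<le> (\<integral>\<^sup>+\<omega>. KL_div (K \<omega>) M \<partial>P) + 1"
    by (intro add_mono nn_integral_mono \<phi>KL) (simp add: P.emeasure_space_1)
  finally have \<phi>int: "(\<integral>\<^sup>+\<omega>. \<phi> \<omega> \<partial>P) \<le> ennreal (I + 1)"
    using I0 by (simp add: Ieq ennreal_plus)
  have ti1: "integrable P (\<lambda>\<omega>. indicator \<Omega>2 \<omega> * t \<omega> * lnL)"
  proof (rule integrableI_nonneg)
    have "(\<integral>\<^sup>+\<omega>. \<phi> \<omega> \<partial>P) < \<top>" using \<phi>int by (rule le_less_trans) simp
    then show "(\<integral>\<^sup>+\<omega>. ennreal (indicator \<Omega>2 \<omega> * t \<omega> * lnL) \<partial>P) < \<infinity>" by (simp add: \<phi>_def)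
    show "AE \<omega> in P. 0 \<le> indicator \<Omega>2 \<omega> * t \<omega> * lnL" using lnL0 t0 by (intro AE_I2) auto
  qed simp
  have ti1b: "(\<integral>\<omega>. indicator \<Omega>2 \<omega> * t \<omega> * lnL \<partial>P) \<le> I + 1"
  proof -
    have "ennreal (\<integral>\<omega>. indicator \<Omega>2 \<omega> * t \<omega> * lnL \<partial>P) = (\<integral>\<^sup>+\<omega>. \<phi> \<omega> \<partial>P)"
      unfolding \<phi>_def using ti1 lnL0 t0 by (intro nn_integral_eq_integral[symmetric]) (auto intro!: AE_I2)
    then have "ennreal (\<integral>\<omega>. indicator \<Omega>2 \<omega> * t \<omega> * lnL \<partial>P) \<le> ennreal (I + 1)"
      using \<phi>int by (simp only:)
    then show ?thesis using I0 by (subst (asm) ennreal_le_iff) auto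
  qed
  have ti: "integrable P (\<lambda>\<omega>. indicator \<Omega>2 \<omega> * t \<omega>)"
    using integrable_divide_zero[OF ti1, of lnL] lnL0 by simp
  have tQ: "integrable Q t" using ti by (subst Qintegrable) auto
  define E where "E = (\<integral>\<omega>. t \<omega> \<partial>Q)"
  have E0: "0 \<le> E" unfolding E_def using t0 by simp
  have Eb: "E * p * lnL \<le> I + 1"
  proof -
    have "E * p * lnL = (\<integral>\<omega>. indicator \<Omega>2 \<omega> * t \<omega> \<partial>P) * lnL" unfolding E_def using p0 by (simp add: Qint)
    also have "\<dots> = (\<integral>\<omega>. indicator \<Omega>2 \<omega> * t \<omega> * lnL \<partial>P)" by simp
    finally show ?thesis using ti1b by (simp only:)
  qed

  define gb where "gb x = (\<integral>\<omega>. g (\<omega>, x) \<partial>Q)" for x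
  have gQm[measurable]: "g \<in> borel_measurable (Q \<Otimes>\<^sub>M M)" by (simp cong: sets_pair_measure_cong add: sQ)
  have gbm[measurable]: "gb \<in> borel_measurable M" unfolding gb_def by measurable
  have gQi: "integrable Q (\<lambda>\<omega>. g (\<omega>, x))" if "x \<in> space M" for x
    using that by (intro Q.integrable_const_bound[where B=L]) (auto simp: g0 abs_of_nonneg intro!: AE_I2)
  have gb0: "0 \<le> gb x" "gb x \<le> L" for x
  proof -
    show "0 \<le> gb x" unfolding gb_def using g0 by simp
    have "gb x \<le> (\<integral>\<omega>. L \<partial>Q)" unfolding gb_def using g0 L1
      by (intro integral_mono_AE' AE_I2) auto
    then show "gb x \<le> L" by (simp add: Q.prob_space)
  qed
  define f where "f \<omega> x = g (\<omega>, x) - gb x" for \<omega> x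
  have fm: "(\<lambda>z. f (fst z) (snd z)) \<in> borel_measurable (Q \<Otimes>\<^sub>M M)" unfolding f_def by measurable
  have fb: "\<bar>f \<omega> x\<bar> \<le> L" for \<omega> x unfolding f_def using g0[of "(\<omega>, x)"] gb0[of x] by linarith
  have f0: "(\<integral>\<omega>. f \<omega> x \<partial>Q) = 0" if "x \<in> space M" for x
    unfolding f_def using gQi[OF that] by (simp add: gb_def Q.prob_space)
  define c where "c = 6 * L\<^sup>2 / \<epsilon>"
  have c0: "0 < c" unfolding c_def using eps L1 by simp
  obtain \<omega> where \<omega>S: "\<forall>j\<in>{1..m}. \<omega> j \<in> \<Omega>2" and
    Gr: "(\<integral>x. (\<Sum>j=1..m. f (\<omega> j) x)\<^sup>2 \<partial>M) + c * (\<Sum>j=1..m. t (\<omega> j)) \<le> real m * (L\<^sup>2 + c * E)"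
    using greedy[OF Qp M_prob fm fb f0 tQ t0 less_imp_le[OF c0] QAE \<Omega>2Q, of m] unfolding E_def by blast

  have \<omega>G: "\<omega> j \<in> G" "\<omega> j \<in> space P" "\<omega> j \<in> \<Omega>1" if "j \<in> {1..m}" for j
  proof -
    have "\<omega> j \<in> \<Omega>2" using \<omega>S that by blast
    then show "\<omega> j \<in> G" "\<omega> j \<in> space P" "\<omega> j \<in> \<Omega>1" using \<Omega>2G GP by blast+
  qed
  have mge: "16 / \<epsilon>\<^sup>2 * L\<^sup>2 \<le> real m" unfolding m_def L2 by (rule real_nat_ceiling_ge)
  have mpos: "0 < real m" using mge eps L1 by (smt (verit) divide_pos_pos mult_pos_pos zero_less_power)
  have sK: "sets (K w) = sets M" "space (K w) = space M" if "w \<in> space P" for w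
    using Kx(1)[OF that] sets_eq_imp_space_eq[OF Kx(1)[OF that]] by auto
  have gi: "integrable M (\<lambda>x. g (w, x))" if "w \<in> space P" for w
    using that g0 L1 by (intro M.integrable_const_bound[where B=L]) (auto intro!: AE_I2)
  have ri: "integrable M (\<lambda>x. r (w, x))" if "w \<in> G" for w
  proof -
    have wP: "w \<in> space P" using that GP by auto
    show ?thesis using HGi[OF that] wP r0 H0
      by (intro Bochner_Integration.integrable_bound[OF HGi[OF that]]) (auto intro!: AE_I2)
  qed
  have kA: "measure (K w) A = (\<integral>x. indicator A x * g (w, x) \<partial>M) + (\<integral>x. indicator A x * r (w, x) \<partial>M)"
    if w: "w \<in> G" and A: "A \<in> sets M" for w A
  proof -
    have wP: "w \<in> space P" using w GP by auto
    have iH: "integrable M (\<lambda>x. indicator A x * H (w, x))"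
      using integrable_real_mult_indicator[OF A HGi[OF w]] by (simp add: mult.commute)
    have "emeasure (K w) A = (\<integral>\<^sup>+x. ennreal (H (w, x)) * indicator A x \<partial>M)"
      using A wP by (simp add: KG[OF w] emeasure_density)
    also have "\<dots> = (\<integral>\<^sup>+x. ennreal (indicator A x * H (w, x)) \<partial>M)"
      by (intro nn_integral_cong) (auto split: split_indicator)
    also have "\<dots> = ennreal (\<integral>x. indicator A x * H (w, x) \<partial>M)"
      using iH H0 by (intro nn_integral_eq_integral) (auto intro!: AE_I2)
    finally have "measure (K w) A = (\<integral>x. indicator A x * H (w, x) \<partial>M)"
      using H0 by (simp add: measure_def integral_nonneg_AE)
    also have "\<dots> = (\<integral>x. indicator A x * g (w, x) + indicator A x * r (w, x) \<partial>M)"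
      by (intro Bochner_Integration.integral_cong refl) (simp add: gr[of "(w, _)"] algebra_simps)
    also have "\<dots> = (\<integral>x. indicator A x * g (w, x) \<partial>M) + (\<integral>x. indicator A x * r (w, x) \<partial>M)"
      using integrable_real_mult_indicator[OF A gi[OF wP]] integrable_real_mult_indicator[OF A ri[OF w]]
      by (subst Bochner_Integration.integral_add) (auto simp: mult.commute)
    finally show ?thesis .
  qed

  have kAm[measurable]: "(\<lambda>w. measure (K w) A) \<in> borel_measurable P" if "A \<in> sets M" for A
    using that by measurable
  have kAmQ[measurable]: "(\<lambda>w. measure (K w) A) \<in> borel_measurable Q" if "A \<in> sets M" for A
    using kAm[OF that] by (simp cong: measurable_cong_sets add: sQ)
  have kA01: "0 \<le> measure (K w) A" "measure (K w) A \<le> 1" if "w \<in> space P" for w A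
    using prob_space.prob_le_1[OF Kx(2)[OF that]] by auto
  have kAPi: "integrable P (\<lambda>w. measure (K w) A)" if "A \<in> sets M" for A
    using that kA01 by (intro P.integrable_const_bound[where B=1]) (auto intro!: AE_I2)
  have kAQi: "integrable Q (\<lambda>w. measure (K w) A)" if "A \<in> sets M" for A
    using that kA01 spQ by (intro Q.integrable_const_bound[where B=1]) (auto intro!: AE_I2)
  have muA: "measure M A = (\<integral>w. measure (K w) A \<partial>P)" if A: "A \<in> sets M" for A
  proof -
    have "emeasure M A = emeasure (P \<bind> K) A" using M_mix by simp
    also have "\<dots> = (\<integral>\<^sup>+ w. emeasure (K w) A \<partial>P)" using A Kx(1) by (intro emeasure_bind[OF P.not_empty KS]) auto
    also have "\<dots> = (\<integral>\<^sup>+ w. ennreal (measure (K w) A) \<partial>P)"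
      by (intro nn_integral_cong) (simp add: finite_measure.emeasure_eq_measure[OF prob_space.finite_measure[OF Kx(2)]])
    also have "\<dots> = ennreal (\<integral>w. measure (K w) A \<partial>P)"
      using kAPi[OF A] kA01 by (intro nn_integral_eq_integral) (auto intro!: AE_I2)
    finally show ?thesis using kA01 by (simp add: M.emeasure_eq_measure integral_nonneg_AE)
  qed
  define rA where "rA w A = (\<integral>x. indicator A x * r (w, x) \<partial>M)" for w A
  define hA where "hA w A = (\<integral>x. indicator A x * g (w, x) \<partial>M)" for w A
  have rAm[measurable]: "(\<lambda>w. rA w A) \<in> borel_measurable P" if [measurable]: "A \<in> sets M" for A
    unfolding rA_def by measurable
  have rAmQ[measurable]: "(\<lambda>w. rA w A) \<in> borel_measurable Q" if "A \<in> sets M" for A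
    using rAm[OF that] by (simp cong: measurable_cong_sets add: sQ)
  have hAmQ[measurable]: "(\<lambda>w. hA w A) \<in> borel_measurable Q" if [measurable]: "A \<in> sets M" for A
    unfolding hA_def by measurable
  have rA0: "0 \<le> rA w A" for w A unfolding rA_def using r0 by (intro integral_nonneg_AE) (auto intro!: AE_I2 split: split_indicator)
  have rAt: "rA w A \<le> t w" if "w \<in> G" "A \<in> sets M" for w A
    unfolding rA_def t_def using that r0 ri[OF that(1)] integrable_real_mult_indicator[OF that(2) ri[OF that(1)]]
    by (intro integral_mono) (auto simp: mult.commute split: split_indicator)
  have rAQi: "integrable Q (\<lambda>w. rA w A)" if A: "A \<in> sets M" for A
  proof (rule Bochner_Integration.integrable_bound[OF tQ])
    show "AE w in Q. norm (rA w A) \<le> norm (t w)"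
      using QAE by eventually_elim (use rAt[OF _ A] \<Omega>2G rA0 t0 in auto)
  qed (use A in measurable)
  have hAb: "\<bar>hA w A\<bar> \<le> L" if "A \<in> sets M" for w A
  proof -
    have "\<bar>hA w A\<bar> \<le> (\<integral>x. \<bar>indicator A x * g (w, x)\<bar> \<partial>M)" unfolding hA_def by (rule integral_abs_bound)
    also have "\<dots> \<le> (\<integral>x. L \<partial>M)"
      using g0 L1 by (intro integral_mono_AE' AE_I2) (auto split: split_indicator)
    finally show ?thesis by (simp add: M.prob_space)
  qed
  have hAQi: "integrable Q (\<lambda>w. hA w A)" if "A \<in> sets M" for A
    using that hAb by (intro Q.integrable_const_bound[where B=L]) (auto intro!: AE_I2)
  have hAQ: "(\<integral>w. hA w A \<partial>Q) = (\<integral>x. indicator A x * gb x \<partial>M)" if A[measurable]: "A \<in> sets M" for A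
  proof -
    have int: "integrable (Q \<Otimes>\<^sub>M M) (\<lambda>(w, x). indicator A x * g (w, x))"
      using g0 L1 by (intro QM.P.integrable_const_bound[where B=L]) (auto intro!: AE_I2 split: split_indicator)
    have "(\<integral>x. indicator A x * gb x \<partial>M) = (\<integral>x. (\<integral>w. indicator A x * g (w, x) \<partial>Q) \<partial>M)"
      unfolding gb_def by simp
    also have "\<dots> = (\<integral>w. hA w A \<partial>Q)" unfolding hA_def using QM.Fubini_integral[OF int] by simp
    finally show ?thesis ..
  qed
  have WQ: "(\<integral>w. measure (K w) A \<partial>Q) = (\<integral>x. indicator A x * gb x \<partial>M) + (\<integral>w. rA w A \<partial>Q)"
    if A[measurable]: "A \<in> sets M" for A
  proof -
    have "(\<integral>w. measure (K w) A \<partial>Q) = (\<integral>w. hA w A + rA w A \<partial>Q)"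
      using QAE by (intro integral_cong_AE) (auto elim!: eventually_mono simp: kA[OF _ A] hA_def rA_def \<Omega>2G[THEN subsetD])
    also have "\<dots> = (\<integral>w. hA w A \<partial>Q) + (\<integral>w. rA w A \<partial>Q)"
      using hAQi[OF A] rAQi[OF A] by simp
    finally show ?thesis using hAQ[OF A] by simp
  qed
  have muS: "measure M A = p * (\<integral>w. measure (K w) A \<partial>Q) + (\<integral>w. indicator (space P - \<Omega>2) w * measure (K w) A \<partial>P)"
    if A[measurable]: "A \<in> sets M" for A
  proof -
    have "(\<integral>w. measure (K w) A \<partial>P) = (\<integral>w. indicator \<Omega>2 w * measure (K w) A + indicator (space P - \<Omega>2) w * measure (K w) A \<partial>P)"
      by (intro Bochner_Integration.integral_cong refl) (auto split: split_indicator)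
    also have "\<dots> = (\<integral>w. indicator \<Omega>2 w * measure (K w) A \<partial>P) + (\<integral>w. indicator (space P - \<Omega>2) w * measure (K w) A \<partial>P)"
      using integrable_real_mult_indicator[OF _ kAPi[OF A], of \<Omega>2] integrable_real_mult_indicator[OF _ kAPi[OF A], of "space P - \<Omega>2"]
      by (subst Bochner_Integration.integral_add) (auto simp: mult.commute)
    also have "(\<integral>w. indicator \<Omega>2 w * measure (K w) A \<partial>P) = p * (\<integral>w. measure (K w) A \<partial>Q)"
      using p0 by (simp add: Qint)
    finally show ?thesis using muA[OF A] by simp
  qed

  define D where "D x = (1 / real m) * (\<Sum>j=1..m. f (\<omega> j) x)" for x
  have fjm[measurable]: "(\<lambda>x. f (\<omega> j) x) \<in> borel_measurable M" if "j \<in> {1..m}" for j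
    using \<omega>G(2)[OF that] unfolding f_def by measurable
  have Dm[measurable]: "D \<in> borel_measurable M"
    unfolding D_def by (intro borel_measurable_times borel_measurable_const borel_measurable_sum fjm)
  have Db: "\<bar>D x\<bar> \<le> L" for x
  proof -
    have "\<bar>\<Sum>j=1..m. f (\<omega> j) x\<bar> \<le> (\<Sum>j=1..m. \<bar>f (\<omega> j) x\<bar>)" by (rule sum_abs)
    also have "\<dots> \<le> (\<Sum>j=1..m. L)" by (intro sum_mono fb)
    finally have "\<bar>\<Sum>j=1..m. f (\<omega> j) x\<bar> \<le> real m * L" by simp
    then show ?thesis using mpos by (simp add: D_def abs_mult field_simps)
  qed
  have Dai: "integrable M (\<lambda>x. \<bar>D x\<bar>)" and Di: "integrable M D" and D2i: "integrable M (\<lambda>x. (D x)\<^sup>2)"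
  proof -
    show "integrable M D" using Db by (intro M.integrable_const_bound[where B=L]) auto
    then show "integrable M (\<lambda>x. \<bar>D x\<bar>)" by simp
    show "integrable M (\<lambda>x. (D x)\<^sup>2)" using Db L1
      by (intro M.integrable_const_bound[where B="L\<^sup>2"]) (auto simp: abs_le_square_iff[symmetric] intro!: AE_I2)
  qed
  define T where "T = (\<Sum>j=1..m. t (\<omega> j))"
  define a where "a = (\<integral>x. \<bar>D x\<bar> \<partial>M)"
  have T0: "0 \<le> T" unfolding T_def using t0 by (simp add: sum_nonneg)
  have a0: "0 \<le> a" unfolding a_def by simp
  have SD: "(\<Sum>j=1..m. f (\<omega> j) x) = real m * D x" for x using mpos by (simp add: D_def)
  have "(\<integral>x. (\<Sum>j=1..m. f (\<omega> j) x)\<^sup>2 \<partial>M) = (real m)\<^sup>2 * (\<integral>x. (D x)\<^sup>2 \<partial>M)"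
    unfolding SD power_mult_distrib by simp
  with Gr have Gr2: "(real m)\<^sup>2 * (\<integral>x. (D x)\<^sup>2 \<partial>M) + c * T \<le> real m * (L\<^sup>2 + c * E)" by (simp add: T_def)
  have aD: "a\<^sup>2 \<le> (\<integral>x. (D x)\<^sup>2 \<partial>M)" unfolding a_def using M_prob Dm D2i Di by (rule sq_int_le)
  have D20: "0 \<le> (\<integral>x. (D x)\<^sup>2 \<partial>M)" by simp
  have a2: "a\<^sup>2 \<le> (L\<^sup>2 + c * E) / real m"
  proof -
    have "(real m)\<^sup>2 * a\<^sup>2 \<le> real m * (L\<^sup>2 + c * E)"
      using Gr2 aD c0 T0 mult_left_mono[OF aD, of "(real m)\<^sup>2"] by (smt (verit) mult_nonneg_nonneg zero_le_power2)
    then have "real m * (real m * a\<^sup>2) \<le> real m * (L\<^sup>2 + c * E)" by (simp add: power2_eq_square mult.assoc)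
    then have "real m * a\<^sup>2 \<le> L\<^sup>2 + c * E" using mpos by simp
    then show ?thesis using mpos by (simp add: field_simps)
  qed
  have Tm: "T / real m \<le> L\<^sup>2 / c + E"
  proof -
    have "c * T \<le> real m * (L\<^sup>2 + c * E)"
      using Gr2 D20 by (smt (verit) mult_nonneg_nonneg zero_le_power2)
    then have "T \<le> real m * (L\<^sup>2 + c * E) / c" using c0 by (simp add: field_simps)
    then have "T / real m \<le> (L\<^sup>2 + c * E) / c" using mpos by (simp add: field_simps)
    also have "\<dots> = L\<^sup>2 / c + E" using c0 by (simp add: field_simps)
    finally show ?thesis .
  qed
  have Bd: "a + T / real m + E + 2 * (1 - p) < 3 * \<epsilon>"
    by (rule numeric_final[OF eps p1 p2 I0 lnL_def _ mge E0 Eb c_def a0 a2 Tm]) (use L1 in simp)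

  define \<nu> where "\<nu> A = (1 / real m) * (\<Sum>j=1..m. measure (K (\<omega> j)) A) - measure M A" for A
  define W where "W A = (\<integral>w. measure (K w) A \<partial>Q)" for A
  define X5 where "X5 A = (\<integral>w. indicator (space P - \<Omega>2) w * measure (K w) A \<partial>P)" for A
  have W0: "0 \<le> W A" for A unfolding W_def using kA01 spQ by (intro integral_nonneg_AE) (auto intro!: AE_I2)
  have X50: "0 \<le> X5 A" for A unfolding X5_def using kA01 by (intro integral_nonneg_AE) (auto intro!: AE_I2 split: split_indicator)
  have X30: "0 \<le> (\<integral>w. rA w A \<partial>Q)" for A using rA0 by simp
  have X20: "0 \<le> (1 / real m) * (\<Sum>j=1..m. rA (\<omega> j) A)" for A using rA0 mpos by (simp add: sum_nonneg)
  have hD: "(\<integral>x. indicator A x * D x \<partial>M) = (1 / real m) * (\<Sum>j=1..m. hA (\<omega> j) A) - (\<integral>x. indicator A x * gb x \<partial>M)"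
    if A[measurable]: "A \<in> sets M" for A
  proof -
    have gji: "integrable M (\<lambda>x. indicator A x * g (\<omega> j, x))" if "j \<in> {1..m}" for j
      using integrable_real_mult_indicator[OF A gi[OF \<omega>G(2)[OF that]]] by (simp add: mult.commute)
    have gbi: "integrable M (\<lambda>x. indicator A x * gb x)"
      using g0 gb0 L1 by (intro M.integrable_const_bound[where B=L]) (auto intro!: AE_I2 split: split_indicator)
    have "(\<integral>x. indicator A x * D x \<partial>M) = (\<integral>x. (1 / real m) * (\<Sum>j=1..m. indicator A x * g (\<omega> j, x)) - indicator A x * gb x \<partial>M)"
      using mpos by (intro Bochner_Integration.integral_cong refl)
        (simp add: D_def f_def sum_subtractf sum_distrib_left[symmetric] algebra_simps)
    also have "\<dots> = (\<integral>x. (1 / real m) * (\<Sum>j=1..m. indicator A x * g (\<omega> j, x)) \<partial>M) - (\<integral>x. indicator A x * gb x \<partial>M)"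
      using gji gbi by (intro Bochner_Integration.integral_diff Bochner_Integration.integrable_mult_right Bochner_Integration.integrable_sum) auto
    also have "(\<integral>x. (1 / real m) * (\<Sum>j=1..m. indicator A x * g (\<omega> j, x)) \<partial>M)
        = (1 / real m) * (\<integral>x. (\<Sum>j=1..m. indicator A x * g (\<omega> j, x)) \<partial>M)"
      by (rule integral_mult_right_zero)
    also have "(\<integral>x. (\<Sum>j=1..m. indicator A x * g (\<omega> j, x)) \<partial>M) = (\<Sum>j=1..m. hA (\<omega> j) A)"
      unfolding hA_def by (rule Bochner_Integration.integral_sum) (rule gji)
    finally show ?thesis .
  qed
  have \<nu>b: "\<bar>\<nu> A\<bar> \<le> (\<integral>x. indicator A x * \<bar>D x\<bar> \<partial>M) + (1 / real m) * (\<Sum>j=1..m. rA (\<omega> j) A)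
      + (\<integral>w. rA w A \<partial>Q) + (1 - p) * W A + X5 A" if A[measurable]: "A \<in> sets M" for A
  proof -
    have s1: "(\<Sum>j=1..m. measure (K (\<omega> j)) A) = (\<Sum>j=1..m. hA (\<omega> j) A) + (\<Sum>j=1..m. rA (\<omega> j) A)"
      by (subst sum.distrib[symmetric], intro sum.cong refl) (simp add: kA[OF \<omega>G(1) A] hA_def rA_def)
    have eq: "\<nu> A = (\<integral>x. indicator A x * D x \<partial>M) + (1 / real m) * (\<Sum>j=1..m. rA (\<omega> j) A)
       - (\<integral>w. rA w A \<partial>Q) + (1 - p) * W A - X5 A"
      unfolding \<nu>_def s1 muS[OF A] hD[OF A] W_def[symmetric] X5_def[symmetric]
      by (simp add: algebra_simps WQ[OF A, folded W_def])
    have "\<bar>\<integral>x. indicator A x * D x \<partial>M\<bar> \<le> (\<integral>x. \<bar>indicator A x * D x\<bar> \<partial>M)" by (rule integral_abs_bound)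
    also have "\<dots> = (\<integral>x. indicator A x * \<bar>D x\<bar> \<partial>M)"
      by (intro Bochner_Integration.integral_cong refl) (auto split: split_indicator)
    finally have "\<bar>\<integral>x. indicator A x * D x \<partial>M\<bar> \<le> (\<integral>x. indicator A x * \<bar>D x\<bar> \<partial>M)" .
    moreover have "0 \<le> (1 - p) * W A" using p2 W0 by simp
    ultimately show ?thesis unfolding eq using X20[of A] X30[of A] X50[of A] by linarith
  qed
  have part: "(\<Sum>A\<in>\<A>. \<bar>\<nu> A\<bar>) \<le> a + T / real m + E + 2 * (1 - p)"
    if \<A>: "finite \<A>" "\<A> \<subseteq> sets M" "disjoint \<A>" "\<Union>\<A> = space M" for \<A>
  proof -
    have AM: "A \<in> sets M" if "A \<in> \<A>" for A using \<A> that by auto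
    have S1: "(\<Sum>A\<in>\<A>. \<integral>x. indicator A x * \<bar>D x\<bar> \<partial>M) = a"
      unfolding a_def using \<A> Dai by (rule int_partition_sum)
    have S2: "(\<Sum>A\<in>\<A>. (1 / real m) * (\<Sum>j=1..m. rA (\<omega> j) A)) = T / real m"
    proof -
      have "(\<Sum>A\<in>\<A>. (1 / real m) * (\<Sum>j=1..m. rA (\<omega> j) A)) = (1 / real m) * (\<Sum>j=1..m. \<Sum>A\<in>\<A>. rA (\<omega> j) A)"
        by (simp only: sum_distrib_left[symmetric] sum.swap[of _ \<A>])
      also have "\<dots> = (1 / real m) * T" unfolding T_def t_def rA_def
        using \<A> ri[OF \<omega>G(1)] by (intro arg_cong2[where f="(*)"] refl sum.cong int_partition_sum) auto
      finally show ?thesis by simp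
    qed
    have S3: "(\<Sum>A\<in>\<A>. \<integral>w. rA w A \<partial>Q) = E"
    proof -
      have "(\<Sum>A\<in>\<A>. \<integral>w. rA w A \<partial>Q) = (\<integral>w. (\<Sum>A\<in>\<A>. rA w A) \<partial>Q)"
        by (rule Bochner_Integration.integral_sum[symmetric]) (use rAQi AM in auto)
      also have "\<dots> = (\<integral>w. t w \<partial>Q)"
      proof (intro integral_cong_AE)
        show "AE w in Q. (\<Sum>A\<in>\<A>. rA w A) = t w"
          using QAE
        proof eventually_elim
          case (elim w)
          then have "w \<in> G" using \<Omega>2G by auto
          then show ?case unfolding rA_def t_def using \<A> ri by (intro int_partition_sum) auto
        qed
      qed (use AM in \<open>auto intro!: borel_measurable_sum\<close>)
      finally show ?thesis unfolding E_def .
    qed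
    have S4: "(\<Sum>A\<in>\<A>. (1 - p) * W A) = 1 - p"
    proof -
      have "(\<Sum>A\<in>\<A>. W A) = (\<integral>w. (\<Sum>A\<in>\<A>. measure (K w) A) \<partial>Q)"
        unfolding W_def by (rule Bochner_Integration.integral_sum[symmetric]) (use kAQi AM in auto)
      also have "\<dots> = (\<integral>w. 1 \<partial>Q)"
        using \<A> by (intro Bochner_Integration.integral_cong refl prob_partition_sum) (auto simp: spQ sK Kx(2))
      finally show ?thesis by (simp add: sum_distrib_left[symmetric] Q.prob_space)
    qed
    have S5: "(\<Sum>A\<in>\<A>. X5 A) = 1 - p"
    proof -
      have "(\<Sum>A\<in>\<A>. X5 A) = (\<integral>w. (\<Sum>A\<in>\<A>. indicator (space P - \<Omega>2) w * measure (K w) A) \<partial>P)"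
        unfolding X5_def
        by (rule Bochner_Integration.integral_sum[symmetric])
           (use kAPi AM in \<open>auto intro!: integrable_real_mult_indicator simp: mult.commute[of "indicator _ _"]\<close>)
      also have "\<dots> = (\<integral>w. indicator (space P - \<Omega>2) w \<partial>P)"
        using \<A> by (intro Bochner_Integration.integral_cong refl)
          (auto simp: sum_distrib_left[symmetric] sK Kx(2) intro!: prob_partition_sum)
      also have "\<dots> = measure P (space P - \<Omega>2)" by simp
      also have "\<dots> = 1 - p" unfolding p_def by (rule P.prob_compl) simp
      finally show ?thesis .
    qed
    have "(\<Sum>A\<in>\<A>. \<bar>\<nu> A\<bar>) \<le> (\<Sum>A\<in>\<A>. (\<integral>x. indicator A x * \<bar>D x\<bar> \<partial>M) + (1 / real m) * (\<Sum>j=1..m. rA (\<omega> j) A)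
      + (\<integral>w. rA w A \<partial>Q) + (1 - p) * W A + X5 A)"
      by (intro sum_mono \<nu>b AM)
    also have "\<dots> = a + T / real m + E + (1 - p) + (1 - p)"
      unfolding sum.distrib S1 S2 S3 S4 S5 by simp
    finally show ?thesis by simp
  qed
  have tv: "tv_norm M \<nu> \<le> a + T / real m + E + 2 * (1 - p)"
    unfolding tv_norm_def
  proof (rule cSup_least)
    show "{\<Sum>A\<in>\<A>. \<bar>\<nu> A\<bar> |\<A>. finite \<A> \<and> \<A> \<subseteq> sets M \<and> disjoint \<A> \<and> \<Union> \<A> = space M} \<noteq> {}"
      by (auto intro!: exI[of _ "{space M}"] simp: disjoint_def)
  qed (use part in auto)
  have "\<forall>j\<in>{1..m}. \<omega> j \<in> \<Omega>1" using \<omega>G(3) by blast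
  moreover have "tv_norm M \<nu> < 3 * \<epsilon>" using tv Bd by linarith
  ultimately show ?thesis
    unfolding Let_def I_def[symmetric] m_def[symmetric] \<nu>_def[abs_def] by blast
qed


end
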